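(* Assume $f$ is in Case 4 and $(n_1,m_1)\neq(0,\delta)$. Then, for every sufficiently small $r>0$, $A_f^{l,+}=A_0\setminus E_z$ for every $0<l<\alpha$.
   Context: Let $f(z,w)=(p(z),q(z,w))$ be a holomorphic skew product defined on $\mathbb{C}^2$ or on $\{|z|<R\}\times\mathbb{C}$, where $R$ is so large that the attracting basin of $p$ at $0$ is relatively compact in $\{|z|<R\}$. Assume $p(z)=az^{\delta}+O(z^{\delta+1})$, $a\neq0$, $\delta\ge2$, and $q(z,w)=\sum_{i,j\ge0}b_{ij}z^iw^j$ with $b_{00}=b_{01}=0$. The Newton polygon $N(q)$ is the convex hull of $\bigcup_{b_{ij}\ne0}\{(x,y):x\ge i,\ y\ge j\}$, with vertices $(n_1,m_1),\dots,(n_s,m_s)$, $n_1<\dots<n_s$, $m_1>\dots>m_s$. For $1\le k\le s-1$, $T_k$ is the $y$-intercept of the line through $(n_k,m_k)$ and $(n_{k+1},m_{k+1})$. Case 4 means $s>2$ and $T_k\le\delta\le T_{k-1}$ for some $2\le k\le s-1$; set $(\gamma,d)=(n_k,m_k)$ and $\alpha=\gamma/(\delta-d)$. For $l>0$, $U^{l,+}=\{|z|<r,\ |w|<r|z|^l\}$ and $A_f^{l,+}=\bigcup_{n\ge0}f^{-n}(U^{l,+})$. $A_0$ is the attracting basin of the origin for $f$ and $E_z=\bigcup_{n\ge0}f^{-n}(\{z=0\})$. *)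

theory Defs
  imports "HOL-Analysis.Analysis"
begin

definition skew :: "(complex \<Rightarrow> complex) \<Rightarrow> (complex \<Rightarrow> complex \<Rightarrow> complex)
    \<Rightarrow> complex \<times> complex \<Rightarrow> complex \<times> complex" where
  "skew p q = (\<lambda>(z,w). (p z, q z w))"

text \<open>n-th preimage of U under F, where F is only defined on D
  (all intermediate iterates must lie in D).\<close>
definition preim :: "('a set) \<Rightarrow> ('a \<Rightarrow> 'a) \<Rightarrow> nat \<Rightarrow> 'a set \<Rightarrow> 'a set" where
  "preim D F n U = {x \<in> D. (\<forall>k<n. (F ^^ k) x \<in> D) \<and> (F ^^ n) x \<in> U}"

definition basin :: "('a::topological_space) set \<Rightarrow> ('a \<Rightarrow> 'a) \<Rightarrow> 'a \<Rightarrow> 'a set" where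
  "basin D F x0 = {x. (\<forall>k. (F ^^ k) x \<in> D) \<and> (\<lambda>k. (F ^^ k) x) \<longlonglongrightarrow> x0}"

definition Ez :: "(complex \<times> complex) set \<Rightarrow> (complex \<times> complex \<Rightarrow> complex \<times> complex)
    \<Rightarrow> (complex \<times> complex) set" where
  "Ez D F = (\<Union>n. preim D F n {x. fst x = 0})"

definition Ulp :: "real \<Rightarrow> real \<Rightarrow> (complex \<times> complex) set" where
  "Ulp r l = {(z,w). norm z < r \<and> norm w < r * norm z powr l}"

definition Alp :: "(complex \<times> complex) set \<Rightarrow> (complex \<times> complex \<Rightarrow> complex \<times> complex)
    \<Rightarrow> real \<Rightarrow> real \<Rightarrow> (complex \<times> complex) set" where
  "Alp D F r l = (\<Union>n. preim D F n (Ulp r l))"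

text \<open>Newton polygon of q = sum b_ij z^i w^j.\<close>
definition newton_polygon :: "(nat \<Rightarrow> nat \<Rightarrow> complex) \<Rightarrow> (real \<times> real) set" where
  "newton_polygon b = convex hull
     (\<Union> {{(x,y). x \<ge> real i \<and> y \<ge> real j} | i j. b i j \<noteq> 0})"

definition newton_vertices :: "(nat \<Rightarrow> nat \<Rightarrow> complex) \<Rightarrow> nat \<Rightarrow> (nat \<Rightarrow> nat) \<Rightarrow> (nat \<Rightarrow> nat) \<Rightarrow> bool" where
  "newton_vertices b s nv mv \<longleftrightarrow>
     {v. v extreme_point_of newton_polygon b} = {(real (nv k), real (mv k)) | k. k \<in> {1..s}}
     \<and> (\<forall>i\<in>{1..s}. \<forall>j\<in>{1..s}. i < j \<longrightarrow> nv i < nv j \<and> mv i > mv j)"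

text \<open>y-intercept of the line through (n_k,m_k) and (n_{k+1},m_{k+1}).\<close>
definition Tint :: "(nat \<Rightarrow> nat) \<Rightarrow> (nat \<Rightarrow> nat) \<Rightarrow> nat \<Rightarrow> real" where
  "Tint nv mv k = real (mv k) + real (nv k) * (real (mv k) - real (mv (k+1)))
                     / (real (nv (k+1)) - real (nv k))"

end

theory Submission
  imports Defs "HOL-Analysis.Analysis"
begin

lemma avg_eq:
  fixes m x y u :: real
  assumes "m = (1-u)*x + u*y" "x \<ge> m" "y \<ge> m" "0<u" "u<1"
  shows "x = m \<and> y = m"
proof -
  have a: "(1-u)*(x-m) \<ge> 0" "u*(y-m) \<ge> 0" using assms by simp_all
  have "(1-u)*(x-m) + u*(y-m) = 0" using assms(1) by (simp add: algebra_simps)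
  hence "(1-u)*(x-m) = 0" "u*(y-m) = 0" using a by linarith+
  thus ?thesis using assms by simp
qed

lemma newton_min_extreme:
  fixes b :: "nat \<Rightarrow> nat \<Rightarrow> complex" and L M :: real
  assumes L: "L > 0" and M: "M > 0" and b0: "b i0 j0 \<noteq> 0"
  shows "\<exists>i j. b i j \<noteq> 0 \<and> (real i, real j) extreme_point_of newton_polygon b \<and>
           (\<forall>i' j'. b i' j' \<noteq> 0 \<longrightarrow> L*i + M*j \<le> L*i' + M*j')"
proof -
  define \<phi> :: "nat \<times> nat \<Rightarrow> real" where "\<phi> = (\<lambda>(i,j). L*i + M*j)"
  define c where "c = \<phi> (i0,j0)"
  define F where "F = {(i,j). b i j \<noteq> 0 \<and> \<phi> (i,j) \<le> c}"
  have "F \<subseteq> {..nat \<lceil>c/L\<rceil>} \<times> {..nat \<lceil>c/M\<rceil>}"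
  proof
    fix x assume "x \<in> F"
    then obtain i j where x: "x = (i,j)" "L*i + M*j \<le> c" by (auto simp: F_def \<phi>_def)
    have "M*j \<ge> 0" "L*i \<ge> 0" using L M by simp_all
    hence "L*i \<le> c" using x by linarith
    hence "real i \<le> c/L" using L by (simp add: field_simps)
    hence "i \<le> nat \<lceil>c/L\<rceil>" by linarith
    moreover have "M*j \<le> c" using x \<open>L*i \<ge> 0\<close> by linarith
    hence "real j \<le> c/M" using M by (simp add: field_simps)
    hence "j \<le> nat \<lceil>c/M\<rceil>" by linarith
    ultimately show "x \<in> {..nat \<lceil>c/L\<rceil>} \<times> {..nat \<lceil>c/M\<rceil>}" using x by auto
  qed
  hence finF: "finite F" by (rule finite_subset) auto
  have i0F: "(i0,j0) \<in> F" using b0 by (auto simp: F_def c_def)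
  define m where "m = Min (\<phi> ` F)"
  define G where "G = {x\<in>F. \<phi> x = m}"
  have finG: "finite G" using finF by (auto simp: G_def)
  have "m \<in> \<phi> ` F" unfolding m_def using finF i0F by (intro Min_in) auto
  hence Gne: "G \<noteq> {}" by (auto simp: G_def)
  define jv where "jv = Min (snd ` G)"
  have "jv \<in> snd ` G" unfolding jv_def using finG Gne by (intro Min_in) auto
  then obtain iv where vG: "(iv,jv) \<in> G" by auto
  have mle: "m \<le> \<phi> x" if "x \<in> F" for x unfolding m_def using finF that by auto
  have minS: "\<phi> (iv,jv) \<le> \<phi> (i,j) \<and> (\<phi> (i,j) = \<phi> (iv,jv) \<longrightarrow> jv \<le> j)" if "b i j \<noteq> 0" for i j
  proof (cases "\<phi> (i,j) \<le> c")
    case True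
    hence ijF: "(i,j) \<in> F" using that by (auto simp: F_def)
    have 1: "\<phi> (iv,jv) = m" using vG by (auto simp: G_def)
    show ?thesis
    proof (intro conjI impI)
      show "\<phi> (iv,jv) \<le> \<phi> (i,j)" using 1 mle[OF ijF] by simp
      assume "\<phi> (i,j) = \<phi> (iv,jv)"
      hence "(i,j) \<in> G" using ijF 1 by (auto simp: G_def)
      thus "jv \<le> j" unfolding jv_def using finG by (metis Min_le finite_imageI image_eqI snd_conv)
    qed
  next
    case False
    have "\<phi> (iv,jv) \<le> c" using vG by (auto simp: G_def F_def)
    thus ?thesis using False by auto
  qed
  have bv: "b iv jv \<noteq> 0" using vG by (auto simp: G_def F_def)
  define \<psi> :: "real \<times> real \<Rightarrow> real" where "\<psi> = (\<lambda>p. L * fst p + M * snd p)"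
  define mm where "mm = \<phi> (iv,jv)"
  have mm: "mm = \<psi> (real iv, real jv)" by (simp add: mm_def \<phi>_def \<psi>_def)
  define C where "C = {p. \<psi> p > mm \<or> (\<psi> p = mm \<and> snd p \<ge> real jv)}"
  have convC: "convex C"
    unfolding convex_def
  proof (intro ballI allI impI)
    fix x y :: "real \<times> real" and u v :: real
    assume xC: "x \<in> C" and yC: "y \<in> C" and u: "0 \<le> u" and v: "0 \<le> v" and uv: "u + v = 1"
    have px: "\<psi> x \<ge> mm" and py: "\<psi> y \<ge> mm" using xC yC by (auto simp: C_def)
    have lin: "\<psi> (u *\<^sub>R x + v *\<^sub>R y) = u * \<psi> x + v * \<psi> y"
      by (simp add: \<psi>_def algebra_simps)
    have ge: "u * \<psi> x + v * \<psi> y \<ge> mm"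
    proof -
      have "u * \<psi> x \<ge> u * mm" using px u by (simp add: mult_left_mono)
      moreover have "v * \<psi> y \<ge> v * mm" using py v by (simp add: mult_left_mono)
      ultimately show ?thesis using uv by (metis add_mono distrib_right mult_1)
    qed
    show "u *\<^sub>R x + v *\<^sub>R y \<in> C"
    proof (cases "u * \<psi> x + v * \<psi> y = mm")
      case False thus ?thesis using ge lin by (auto simp: C_def)
    next
      case True
      have a1: "u * \<psi> x = u * mm" 
      proof -
        have "u * \<psi> x \<ge> u * mm" using px u by (simp add: mult_left_mono)
        moreover have "v * \<psi> y \<ge> v * mm" using py v by (simp add: mult_left_mono)
        moreover have "u * mm + v * mm = mm" using uv by (metis distrib_right mult_1)
        ultimately show ?thesis using True by linarith
      qed
      have a2: "v * \<psi> y = v * mm" 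
      proof -
        have "u * \<psi> x \<ge> u * mm" using px u by (simp add: mult_left_mono)
        moreover have "v * \<psi> y \<ge> v * mm" using py v by (simp add: mult_left_mono)
        moreover have "u * mm + v * mm = mm" using uv by (metis distrib_right mult_1)
        ultimately show ?thesis using True by linarith
      qed
      have s1: "u * snd x \<ge> u * real jv"
      proof (cases "u = 0")
        case False
        hence "\<psi> x = mm" using a1 by simp
        hence "snd x \<ge> jv" using xC by (auto simp: C_def)
        thus ?thesis using u by (simp add: mult_left_mono)
      qed simp
      have s2: "v * snd y \<ge> v * real jv"
      proof (cases "v = 0")
        case False
        hence "\<psi> y = mm" using a2 by simp
        hence "snd y \<ge> jv" using yC by (auto simp: C_def)
        thus ?thesis using v by (simp add: mult_left_mono)
      qed simp
      have "snd (u *\<^sub>R x + v *\<^sub>R y) \<ge> real jv"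
        using s1 s2 uv by (simp, metis add_mono distrib_right mult_1)
      thus ?thesis using True lin by (auto simp: C_def)
    qed
  qed
  define X where "X = \<Union> {{(x,y). x \<ge> real i \<and> y \<ge> real j} | i j. b i j \<noteq> 0}"
  have NP: "newton_polygon b = convex hull X" by (simp add: newton_polygon_def X_def)
  have XC: "X \<subseteq> C"
  proof
    fix p assume "p \<in> X"
    then obtain i j where bij: "b i j \<noteq> 0" and p: "fst p \<ge> real i" "snd p \<ge> real j"
      by (auto simp: X_def)
    have ms: "mm \<le> L*i + M*j" and ms2: "L*i + M*j = mm \<longrightarrow> jv \<le> j"
      using minS[OF bij] by (auto simp: mm_def \<phi>_def)
    have "L * fst p \<ge> L * i" "M * snd p \<ge> M * j" using p L M by simp_all
    hence "\<psi> p \<ge> L*i + M*j" unfolding \<psi>_def by linarith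
    moreover have "\<psi> p = mm \<Longrightarrow> snd p \<ge> jv"
    proof -
      assume e: "\<psi> p = mm"
      have "L*(fst p - i) + M*(snd p - j) = \<psi> p - (L*i + M*j)" by (simp add: \<psi>_def algebra_simps)
      moreover have "L*(fst p - i) \<ge> 0" "M*(snd p - j) \<ge> 0" using p L M by auto
      ultimately have "L*i + M*j = mm" using e ms by linarith
      hence "jv \<le> j" using ms2 by simp
      thus "snd p \<ge> jv" using p by linarith
    qed
    ultimately show "p \<in> C" using ms unfolding C_def by force
  qed
  have PC: "newton_polygon b \<subseteq> C" unfolding NP using XC convC by (simp add: hull_minimal)
  have vX: "(real iv, real jv) \<in> X" using bv by (auto simp: X_def)
  have vP: "(real iv, real jv) \<in> newton_polygon b" unfolding NP using vX by (rule hull_inc)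
  have ext: "(real iv, real jv) extreme_point_of newton_polygon b"
    unfolding extreme_point_of_def
  proof (intro conjI ballI vP notI)
    fix x y assume xP: "x \<in> newton_polygon b" and yP: "y \<in> newton_polygon b"
      and seg: "(real iv, real jv) \<in> open_segment x y"
    then obtain u where xy: "x \<noteq> y" and u: "0 < u" "u < 1"
      and eq: "(real iv, real jv) = (1 - u) *\<^sub>R x + u *\<^sub>R y" by (auto simp: in_segment)
    have xC: "x \<in> C" and yC: "y \<in> C" using xP yP PC by auto
    have px: "\<psi> x \<ge> mm" and py: "\<psi> y \<ge> mm" using xC yC by (auto simp: C_def)
    have e1: "real iv = (1-u) * fst x + u * fst y" using arg_cong[OF eq, of fst] by simp
    have e2: "real jv = (1-u) * snd x + u * snd y" using arg_cong[OF eq, of snd] by simp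
    have "mm = (1-u) * \<psi> x + u * \<psi> y" unfolding mm \<psi>_def fst_conv snd_conv e1 e2
      by (simp add: algebra_simps)
    hence ex: "\<psi> x = mm" and ey: "\<psi> y = mm" using px py u avg_eq by blast+
    have sx: "snd x \<ge> jv" and sy: "snd y \<ge> jv" using xC yC ex ey by (auto simp: C_def)
    from e2 have "snd x = jv" "snd y = jv" using sx sy u avg_eq by blast+
    hence "snd x = snd y" "fst x = fst y" using ex ey L by (auto simp: \<psi>_def)
    thus False using xy by (simp add: prod_eq_iff)
  qed
  show ?thesis
    using bv ext minS by (intro exI[of _ iv] exI[of _ jv]) (auto simp: \<phi>_def)
qed

lemma np_up:
  assumes "p \<in> newton_polygon b" "c \<ge> 0"
  shows "p + (0,c) \<in> newton_polygon b"
proof -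
  define X where "X = \<Union> {{(x,y). x \<ge> real i \<and> y \<ge> real j} | i j. b i j \<noteq> 0}"
  have NP: "newton_polygon b = convex hull X" by (simp add: newton_polygon_def X_def)
  have sub: "(\<lambda>x. (0,c) + x) ` X \<subseteq> X"
  proof
    fix y assume "y \<in> (\<lambda>x. (0,c) + x) ` X"
    then obtain x where y: "y = (0,c) + x" and x: "x \<in> X" by auto
    from x obtain i j where bij: "b i j \<noteq> 0" and xx: "fst x \<ge> real i" "snd x \<ge> real j" by (auto simp: X_def)
    have "y \<in> {(x,y). x \<ge> real i \<and> y \<ge> real j}" using y xx assms(2) by (cases x) auto
    thus "y \<in> X" unfolding X_def using bij by blast
  qed
  have "(0,c) + p \<in> (\<lambda>x. (0,c) + x) ` (convex hull X)" using assms(1) NP by auto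
  also have "\<dots> = convex hull ((\<lambda>x. (0,c) + x) ` X)" by (simp add: convex_hull_translation)
  also have "\<dots> \<subseteq> convex hull X" using sub by (rule hull_mono)
  finally show ?thesis using NP by (simp add: add.commute)
qed

lemma vert_ext:
  assumes "newton_vertices b s nv mv" "1 \<le> i" "i \<le> s"
  shows "(real (nv i), real (mv i)) extreme_point_of newton_polygon b"
proof -
  have "(real (nv i), real (mv i)) \<in> {(real (nv k), real (mv k)) | k. k \<in> {1..s}}" using assms(2,3) by auto
  thus ?thesis using assms(1) unfolding newton_vertices_def by (metis (no_types, lifting) mem_Collect_eq)
qed

lemma vert_chain:
  assumes V: "newton_vertices b s nv mv" and i: "1 \<le> i1" "i1 < i2" "i2 < i3" "i3 \<le> s"
  shows "(real (nv i3) - real (nv i1)) * real (mv i2) \<le>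
         (real (nv i3) - real (nv i2)) * real (mv i1) + (real (nv i2) - real (nv i1)) * real (mv i3)"
proof (rule ccontr)
  assume H: "\<not> ?thesis"
  define n1 where "n1 = real (nv i1)"
  define n2 where "n2 = real (nv i2)"
  define n3 where "n3 = real (nv i3)"
  define m1 where "m1 = real (mv i1)"
  define m2 where "m2 = real (mv i2)"
  define m3 where "m3 = real (mv i3)"
  have mono: "\<forall>i\<in>{1..s}. \<forall>j\<in>{1..s}. i < j \<longrightarrow> nv i < nv j \<and> mv i > mv j"
    using V unfolding newton_vertices_def by blast
  have n12: "n1 < n2" and n23: "n2 < n3" using mono i by (auto simp: n1_def n2_def n3_def)
  have e1: "(n1,m1) extreme_point_of newton_polygon b" unfolding n1_def m1_def
    using vert_ext[OF V] i by auto
  have e2: "(n2,m2) extreme_point_of newton_polygon b" unfolding n2_def m2_def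
    using vert_ext[OF V] i by auto
  have e3: "(n3,m3) extreme_point_of newton_polygon b" unfolding n3_def m3_def
    using vert_ext[OF V] i by auto
  have P1: "(n1,m1) \<in> newton_polygon b" and P3: "(n3,m3) \<in> newton_polygon b"
    using e1 e3 by (auto simp: extreme_point_of_def)
  define t where "t = (n3 - n2)/(n3 - n1)"
  have t0: "0 \<le> t" "t \<le> 1" using n12 n23 by (auto simp: t_def field_simps)
  define P where "P = t *\<^sub>R (n1,m1) + (1-t) *\<^sub>R (n3,m3)"
  have cv: "convex (newton_polygon b)" by (simp add: newton_polygon_def)
  have PP: "P \<in> newton_polygon b" unfolding P_def
    using convexD[OF cv P1 P3, of t "1-t"] t0 by simp
  have tt: "t * (n3 - n1) = n3 - n2" unfolding t_def using n12 n23 by simp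
  have fP: "fst P = n2"
  proof -
    have "fst P = n3 - t * (n3 - n1)" unfolding P_def by (simp add: algebra_simps)
    thus ?thesis using tt by simp
  qed
  have sP: "(n3 - n1) * snd P = (n3 - n2) * m1 + (n2 - n1) * m3"
  proof -
    have "(n3 - n1) * snd P = (t * (n3 - n1)) * m1 + ((n3 - n1) - t * (n3 - n1)) * m3"
      unfolding P_def by (simp add: algebra_simps)
    thus ?thesis using tt by simp
  qed
  have "(n3 - n1) * m2 > (n3 - n1) * snd P" using H sP
    unfolding n1_def n2_def n3_def m1_def m2_def m3_def by linarith
  hence gt: "m2 > snd P" using n12 n23 by (simp add: mult_less_cancel_left)
  define c where "c = m2 - snd P"
  have c0: "c > 0" using gt by (simp add: c_def)
  have Q: "P + (0, 2*c) \<in> newton_polygon b" using np_up[OF PP] c0 by simp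
  have eq: "(n2,m2) = (1 - 1/2) *\<^sub>R P + (1/2) *\<^sub>R (P + (0,2*c))"
    using fP by (simp add: c_def prod_eq_iff algebra_simps)
  have "(n2,m2) \<in> open_segment P (P + (0,2*c))"
    unfolding in_segment using c0 eq by (intro conjI exI[of _ "1/2"]) (auto simp: prod_eq_iff)
  thus False using e2 PP Q unfolding extreme_point_of_def by blast
qed

lemma chain_right:
  fixes D1 D2 al mp d mj :: real
  assumes "D1 > 0" "D2 > 0" "al \<ge> 0" "(D1+D2)*mp \<le> D2*d + D1*mj" "al*(mp - d) \<ge> -D1"
  shows "al*(mj - d) \<ge> -(D1+D2)"
proof -
  have "D1*(mj - d) \<ge> (D1+D2)*(mp - d)" using assms(4) by (simp add: algebra_simps)
  hence "al*(D1*(mj - d)) \<ge> al*((D1+D2)*(mp - d))" using assms(3) by (rule mult_left_mono)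
  moreover have "(D1+D2)*(al*(mp - d)) \<ge> (D1+D2)*(-D1)" using assms by (intro mult_left_mono) auto
  ultimately have "D1*(al*(mj - d)) \<ge> D1*(-(D1+D2))" by (simp add: algebra_simps)
  thus ?thesis using assms(1) by simp
qed

lemma chain_left:
  fixes D1 D2 al mp d mj :: real
  assumes "D1 > 0" "D2 > 0" "al \<ge> 0" "(D1+D2)*mp \<le> D1*mj + D2*d" "al*(mp - d) \<ge> D1"
  shows "al*(mj - d) \<ge> D1+D2"
proof -
  have "D1*(mj - d) \<ge> (D1+D2)*(mp - d)" using assms(4) by (simp add: algebra_simps)
  hence "al*(D1*(mj - d)) \<ge> al*((D1+D2)*(mp - d))" using assms(3) by (rule mult_left_mono)
  moreover have "(D1+D2)*(al*(mp - d)) \<ge> (D1+D2)*D1" using assms by (intro mult_left_mono) auto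
  ultimately have "D1*(al*(mj - d)) \<ge> D1*(D1+D2)" by (simp add: algebra_simps)
  thus ?thesis using assms(1) by simp
qed

lemma vertex_core:
  assumes V: "newton_vertices b s nv mv" and k: "2 \<le> k" "k \<le> s - 1" "s > 2"
    and T: "Tint nv mv k \<le> real \<delta>" "real \<delta> \<le> Tint nv mv (k-1)"
  shows "real \<delta> > real (mv k)"
    and "\<And>j. 1 \<le> j \<Longrightarrow> j \<le> s \<Longrightarrow>
           real (nv j) + (real (nv k) / (real \<delta> - real (mv k))) * real (mv j)
           \<ge> real (nv k) + (real (nv k) / (real \<delta> - real (mv k))) * real (mv k)"
proof -
  have mono: "\<forall>i\<in>{1..s}. \<forall>j\<in>{1..s}. i < j \<longrightarrow> nv i < nv j \<and> mv i > mv j"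
    using V unfolding newton_vertices_def by blast
  have monoI: "nv i < nv j" "mv i > mv j" if "1 \<le> i" "i < j" "j \<le> s" for i j
    using mono that by auto
  define g where "g = real (nv k)"
  define d where "d = real (mv k)"
  define n' where "n' = real (nv (k+1))"
  define m' where "m' = real (mv (k+1))"
  define np where "np = real (nv (k-1))"
  define mp where "mp = real (mv (k-1))"
  have ks: "k \<le> s" "k+1 \<le> s" "1 \<le> k-1" "k-1 < k" "1 < k" using k by auto
  have g0: "g > 0" using monoI[of 1 k] ks unfolding g_def by simp
  have ng: "n' > g" "m' < d" using monoI[of k "k+1"] ks unfolding g_def n'_def d_def m'_def by auto
  have pg: "np < g" "mp > d" using monoI[of "k-1" k] ks unfolding g_def np_def d_def mp_def by auto
  have np0: "np \<ge> 0" unfolding np_def by simp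
  have Tk: "Tint nv mv k = d + g * (d - m') / (n' - g)"
    unfolding Tint_def g_def d_def n'_def m'_def by simp
  have Tk1: "Tint nv mv (k-1) = mp + np * (mp - d) / (g - np)"
    unfolding Tint_def g_def d_def np_def mp_def using k by simp
  have pos1: "g * (d - m') / (n' - g) > 0" using g0 ng by simp
  show dd: "real \<delta> > real (mv k)" using T(1) Tk pos1 unfolding d_def by linarith
  hence dd': "real \<delta> - d > 0" unfolding d_def by simp
  define al where "al = g / (real \<delta> - d)"
  have al0: "al > 0" using g0 dd' by (simp add: al_def)
  have alE: "al * (real \<delta> - d) = g" using dd' by (simp add: al_def)
  have A: "al * (m' - d) \<ge> -(n' - g)"
  proof -
    have "g * (d - m') / (n' - g) \<le> real \<delta> - d" using T(1) Tk by linarith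
    hence "g * (d - m') \<le> (real \<delta> - d) * (n' - g)" using ng by (simp add: pos_divide_le_eq)
    hence "al * (real \<delta> - d) * (d - m') \<le> (real \<delta> - d) * (n' - g)" using alE by simp
    hence "(real \<delta> - d) * (al * (d - m')) \<le> (real \<delta> - d) * (n' - g)" by (simp add: algebra_simps)
    hence "al * (d - m') \<le> n' - g" using dd' by simp
    thus ?thesis by (simp add: algebra_simps)
  qed
  have B: "al * (mp - d) \<ge> g - np"
  proof -
    have "real \<delta> - d \<le> (mp - d) + np * (mp - d) / (g - np)" using T(2) Tk1 by linarith
    also have "\<dots> = (mp - d) * g / (g - np)" using pg by (simp add: field_simps)
    finally have "(real \<delta> - d) * (g - np) \<le> (mp - d) * g" using pg by (simp add: pos_le_divide_eq)
    hence "(real \<delta> - d) * (g - np) \<le> (mp - d) * (al * (real \<delta> - d))" using alE by simp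
    hence "(real \<delta> - d) * (g - np) \<le> (real \<delta> - d) * (al * (mp - d))" by (simp add: algebra_simps)
    thus ?thesis using dd' by simp
  qed
  fix j assume j: "1 \<le> j" "j \<le> s"
  define nj where "nj = real (nv j)"
  define mj where "mj = real (mv j)"
  have "nj + al * mj \<ge> g + al * d"
  proof (cases "j = k")
    case True thus ?thesis unfolding nj_def mj_def g_def d_def by simp
  next
    case False
    show ?thesis
    proof (cases "j > k")
      case True
      show ?thesis
      proof (cases "j = k+1")
        case True thus ?thesis using A unfolding nj_def mj_def n'_def m'_def by (simp add: algebra_simps)
      next
        case False
        hence jk: "k+1 < j" using \<open>j > k\<close> by simp
        have ch: "(nj - g) * m' \<le> (nj - n') * d + (n' - g) * mj"
          using vert_chain[OF V, of k "k+1" j] k jk j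
          unfolding nj_def mj_def g_def d_def n'_def m'_def by simp
        have nn: "nj > n'" using monoI[of "k+1" j] jk j unfolding nj_def n'_def by simp
        have "al*(mj - d) \<ge> -((n' - g)+(nj - n'))"
          by (rule chain_right) (use ng nn al0 ch A in \<open>auto simp: algebra_simps\<close>)
        thus ?thesis by (simp add: algebra_simps)
      qed
    next
      case False
      hence jk: "j < k" using \<open>j \<noteq> k\<close> by simp
      show ?thesis
      proof (cases "j = k-1")
        case True thus ?thesis using B unfolding nj_def mj_def np_def mp_def by (simp add: algebra_simps)
      next
        case False
        hence jk': "j < k-1" using jk by simp
        have ch: "(g - nj) * mp \<le> (g - np) * mj + (np - nj) * d"
          using vert_chain[OF V, of j "k-1" k] k jk' j
          unfolding nj_def mj_def g_def d_def np_def mp_def by simp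
        have nn: "nj < np" using monoI[of j "k-1"] jk' j k unfolding nj_def np_def by simp
        have "al*(mj - d) \<ge> (g - np)+(np - nj)"
          by (rule chain_left) (use pg nn al0 ch B in \<open>auto simp: algebra_simps\<close>)
        thus ?thesis by (simp add: algebra_simps)
      qed
    qed
  qed
  thus "real (nv j) + (real (nv k) / (real \<delta> - real (mv k))) * real (mv j)
           \<ge> real (nv k) + (real (nv k) / (real \<delta> - real (mv k))) * real (mv k)"
    unfolding nj_def mj_def al_def g_def d_def .
qed

lemma vertex_ineq:
  assumes V: "newton_vertices b s nv mv" and k: "2 \<le> k" "k \<le> s - 1" "s > 2"
    and T: "Tint nv mv k \<le> real \<delta>" "real \<delta> \<le> Tint nv mv (k-1)"
    and fv: "(nv 1, mv 1) \<noteq> (0, \<delta>)"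
    and l: "0 < l" "l < real (nv k) / (real \<delta> - real (mv k))"
    and j: "1 \<le> j" "j \<le> s"
  shows "real (nv j) + l * real (mv j) > real \<delta> * l"
proof -
  have mono: "\<forall>i\<in>{1..s}. \<forall>j\<in>{1..s}. i < j \<longrightarrow> nv i < nv j \<and> mv i > mv j"
    using V unfolding newton_vertices_def by blast
  have dd: "real \<delta> > real (mv k)" by (rule vertex_core(1)[OF V k T])
  define al where "al = real (nv k) / (real \<delta> - real (mv k))"
  have alE: "al * (real \<delta> - real (mv k)) = real (nv k)" using dd by (simp add: al_def)
  have core: "real (nv j) + al * real (mv j) \<ge> real (nv k) + al * real (mv k)"
    unfolding al_def by (rule vertex_core(2)[OF V k T j])
  have F: "real (nv j) + al * (real (mv j) - real \<delta>) \<ge> 0"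
    using core alE by (simp add: algebra_simps)
  have la: "l < al" using l by (simp add: al_def)
  show ?thesis
  proof (cases "nv j = 0")
    case False
    hence nj: "real (nv j) > 0" by simp
    have "al * (real (nv j) + l * (real (mv j) - real \<delta>))
        = (al - l) * real (nv j) + l * (real (nv j) + al * (real (mv j) - real \<delta>))"
      by (simp add: algebra_simps)
    also have "\<dots> > 0" using la nj F l by (intro add_pos_nonneg) auto
    finally have "al * (real (nv j) + l * (real (mv j) - real \<delta>)) > 0" .
    moreover have "al > 0" using la l by simp
    ultimately have "real (nv j) + l * (real (mv j) - real \<delta>) > 0" by (simp add: zero_less_mult_iff)
    thus ?thesis by (simp add: algebra_simps)
  next
    case True
    have al0: "al > 0" using la l by simp
    have "al * (real (mv j) - real \<delta>) \<ge> 0" using F True by simp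
    hence ge: "real (mv j) \<ge> real \<delta>" using al0 by (simp add: zero_le_mult_iff)
    have "mv j \<noteq> \<delta>"
    proof
      assume e: "mv j = \<delta>"
      have "j = 1"
      proof (rule ccontr)
        assume "j \<noteq> 1"
        hence "nv 1 < nv j" using mono j by auto
        thus False using True by simp
      qed
      thus False using fv e True by simp
    qed
    hence "real (mv j) > real \<delta>" using ge by simp
    thus ?thesis using True l by (simp add: algebra_simps)
  qed
qed

lemma min_vertex:
  fixes L M :: real
  assumes V: "newton_vertices b s nv mv" and L: "L > 0" and M: "M > 0" and b0: "b i0 j0 \<noteq> 0"
  shows "\<exists>k\<in>{1..s}. b (nv k) (mv k) \<noteq> 0 \<and>
           (\<forall>i' j'. b i' j' \<noteq> 0 \<longrightarrow> L * nv k + M * mv k \<le> L*i' + M*j')"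
proof -
  obtain i j where bij: "b i j \<noteq> 0" and ext: "(real i, real j) extreme_point_of newton_polygon b"
    and mn: "\<forall>i' j'. b i' j' \<noteq> 0 \<longrightarrow> L*i + M*j \<le> L*i' + M*j'"
    using newton_min_extreme[of L M b i0 j0] L M b0 by blast
  have "(real i, real j) \<in> {v. v extreme_point_of newton_polygon b}" using ext by simp
  hence "(real i, real j) \<in> {(real (nv k), real (mv k)) | k. k \<in> {1..s}}"
    using V unfolding newton_vertices_def by blast
  then obtain k where k: "k \<in> {1..s}" "real i = real (nv k)" "real j = real (mv k)" by auto
  hence "i = nv k" "j = mv k" by simp_all
  thus ?thesis using k bij mn by auto
qed

lemma mono_bound:
  fixes x y :: real
  assumes V: "newton_vertices b s nv mv" and x: "0 \<le> x" "x < 1" and y: "0 \<le> y" "y < 1"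
    and bij: "b i j \<noteq> 0"
  shows "x^i * y^j \<le> (\<Sum>k\<in>{k\<in>{1..s}. b (nv k) (mv k) \<noteq> 0}. x ^ nv k * y ^ mv k)"
proof -
  define V' where "V' = {k\<in>{1..s}. b (nv k) (mv k) \<noteq> 0}"
  have finV: "finite V'" by (simp add: V'_def)
  have nn: "\<And>k. 0 \<le> x ^ nv k * y ^ mv k" using x y by simp
  have single: "x ^ nv k * y ^ mv k \<le> (\<Sum>k\<in>V'. x ^ nv k * y ^ mv k)" if "k \<in> V'" for k
    using finV that nn by (intro member_le_sum) auto
  have "x^i * y^j \<le> (\<Sum>k\<in>V'. x ^ nv k * y ^ mv k)"
  proof (cases "x = 0 \<and> i > 0 \<or> y = 0 \<and> j > 0")
    case True
    have z: "x^i * y^j = 0" using True by auto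
    have "0 \<le> (\<Sum>k\<in>V'. x ^ nv k * y ^ mv k)" using nn by (intro sum_nonneg) auto
    thus ?thesis using z by linarith
  next
    case False
    consider (x0) "x = 0" "i = 0" | (y0) "x > 0" "y = 0" "j = 0" | (pos) "x > 0" "y > 0"
      using False x y by force
    thus ?thesis
    proof cases
      case x0
      obtain k where k: "k\<in>{1..s}" "b (nv k) (mv k) \<noteq> 0"
        and mn: "\<forall>i' j'. b i' j' \<noteq> 0 \<longrightarrow> (real j + 1) * nv k + 1 * mv k \<le> (real j + 1)*i' + 1*j'"
        using min_vertex[OF V _ _ bij, of "real j + 1" 1] by auto
      have "(real j + 1) * nv k + mv k \<le> real j" using mn bij x0 by force
      note h = this
      have nk: "nv k = 0"
      proof (rule ccontr)
        assume "nv k \<noteq> 0"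
        hence "real (nv k) \<ge> 1" by simp
        hence "(real j + 1) * 1 \<le> (real j + 1) * nv k" by (intro mult_left_mono) auto
        moreover have "real (mv k) \<ge> 0" "real (nv k) \<ge> 0" by simp_all
        ultimately show False using h by (simp add: algebra_simps)
      qed
      hence mk: "mv k \<le> j" using h by simp
      have "x^i * y^j = y^j" using x0 by simp
      also have "\<dots> \<le> y ^ mv k" using y mk by (intro power_decreasing) auto
      also have "\<dots> = x ^ nv k * y ^ mv k" using nk by simp
      also have "\<dots> \<le> (\<Sum>k\<in>V'. x ^ nv k * y ^ mv k)" using k by (intro single) (simp add: V'_def)
      finally show ?thesis .
    next
      case y0
      obtain k where k: "k\<in>{1..s}" "b (nv k) (mv k) \<noteq> 0"
        and mn: "\<forall>i' j'. b i' j' \<noteq> 0 \<longrightarrow> 1 * nv k + (real i + 1) * mv k \<le> 1 * i' + (real i + 1) * j'"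
        using min_vertex[OF V _ _ bij, of 1 "real i + 1"] by auto
      have "nv k + (real i + 1) * mv k \<le> real i" using mn bij y0 by force
      note h = this
      have nk: "mv k = 0"
      proof (rule ccontr)
        assume "mv k \<noteq> 0"
        hence "real (mv k) \<ge> 1" by simp
        hence "(real i + 1) * 1 \<le> (real i + 1) * mv k" by (intro mult_left_mono) auto
        moreover have "real (mv k) \<ge> 0" "real (nv k) \<ge> 0" by simp_all
        ultimately show False using h by (simp add: algebra_simps)
      qed
      hence mk: "nv k \<le> i" using h by simp
      have "x^i * y^j = x^i" using y0 by simp
      also have "\<dots> \<le> x ^ nv k" using x mk by (intro power_decreasing) auto
      also have "\<dots> = x ^ nv k * y ^ mv k" using nk by simp
      also have "\<dots> \<le> (\<Sum>k\<in>V'. x ^ nv k * y ^ mv k)" using k by (intro single) (simp add: V'_def)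
      finally show ?thesis .
    next
      case pos
      have L: "- ln x > 0" and M: "- ln y > 0" using pos x y by simp_all
      obtain k where k: "k\<in>{1..s}" "b (nv k) (mv k) \<noteq> 0"
        and mn: "\<forall>i' j'. b i' j' \<noteq> 0 \<longrightarrow> (- ln x) * nv k + (- ln y) * mv k \<le> (- ln x) * i' + (- ln y) * j'"
        using min_vertex[OF V L M bij] by auto
      have e: "x^a * y^c = exp (real a * ln x + real c * ln y)" for a c
        using pos by (simp add: exp_add exp_of_nat_mult)
      have "x^i * y^j \<le> x ^ nv k * y ^ mv k"
      proof -
        have "- ln x * nv k + - ln y * mv k \<le> - ln x * i + - ln y * j" using mn bij by blast
        hence "real i * ln x + real j * ln y \<le> real (nv k) * ln x + real (mv k) * ln y"
          by (simp add: algebra_simps)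
        thus ?thesis unfolding e by simp
      qed
      also have "\<dots> \<le> (\<Sum>k\<in>V'. x ^ nv k * y ^ mv k)" using k by (intro single) (simp add: V'_def)
      finally show ?thesis .
    qed
  qed
  thus ?thesis by (simp add: V'_def)
qed

lemma q_bound:
  fixes q :: "complex \<Rightarrow> complex \<Rightarrow> complex" and b :: "nat \<Rightarrow> nat \<Rightarrow> complex"
  assumes V: "newton_vertices b s nv mv"
    and q_exp: "\<exists>\<rho>>0. \<forall>z w. norm z < \<rho> \<longrightarrow> norm w < \<rho> \<longrightarrow>
                   ((\<lambda>(i,j). b i j * z ^ i * w ^ j) has_sum q z w) UNIV"
  shows "\<exists>K \<rho>1. K > 0 \<and> 0 < \<rho>1 \<and> \<rho>1 < 1 \<and> (\<forall>z w. norm z < \<rho>1 \<longrightarrow> norm w < \<rho>1 \<longrightarrow>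
      norm (q z w) \<le> K * (\<Sum>k\<in>{k\<in>{1..s}. b (nv k) (mv k) \<noteq> 0}. norm z ^ nv k * norm w ^ mv k))"
proof -
  obtain \<rho> where \<rho>: "\<rho> > 0" and hs: "\<And>z w. norm z < \<rho> \<Longrightarrow> norm w < \<rho> \<Longrightarrow>
                   ((\<lambda>(i,j). b i j * z ^ i * w ^ j) has_sum q z w) UNIV" using q_exp by blast
  define r1 where "r1 = min (\<rho>/2) (1/2)"
  have r1: "0 < r1" "r1 < \<rho>" "r1 < 1" using \<rho> by (auto simp: r1_def)
  define V' where "V' = {k\<in>{1..s}. b (nv k) (mv k) \<noteq> 0}"
  have finV: "finite V'" by (simp add: V'_def)
  have hs1: "((\<lambda>(i,j). b i j * complex_of_real r1 ^ i * complex_of_real r1 ^ j) has_sum q r1 r1) UNIV"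
    using hs r1 by simp
  hence "(\<lambda>x. norm ((\<lambda>(i,j). b i j * complex_of_real r1 ^ i * complex_of_real r1 ^ j) x)) summable_on UNIV"
    using summable_on_iff_abs_summable_on_complex summable_on_def by blast
  moreover have "(\<lambda>x. norm ((\<lambda>(i,j). b i j * complex_of_real r1 ^ i * complex_of_real r1 ^ j) x))
       = (\<lambda>(i,j). norm (b i j) * r1 ^ i * r1 ^ j)"
    using r1 by (auto simp: norm_mult norm_power fun_eq_iff)
  ultimately have g0s: "(\<lambda>(i,j). norm (b i j) * r1 ^ i * r1 ^ j) summable_on UNIV" by simp
  define g0 where "g0 = (\<lambda>(i::nat,j::nat). norm (b i j) * r1 ^ i * r1 ^ j)"
  have g0s': "g0 summable_on UNIV" using g0s by (simp add: g0_def)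
  have g0nn: "g0 x \<ge> 0" for x using r1 by (auto simp: g0_def split: prod.splits)
  have g0a: "(\<lambda>x. norm (g0 x)) summable_on UNIV"
    using g0s' summable_on_iff_abs_summable_on_real by blast
  define B where "B = infsum g0 UNIV"
  have B0: "B \<ge> 0" unfolding B_def using g0nn by (simp add: infsum_nonneg)
  define C0 where "C0 = (\<Sum>k\<in>V'. (1/r1) ^ (nv k + mv k))"
  have C0nn: "C0 \<ge> 0" unfolding C0_def using r1 by (intro sum_nonneg) auto
  define K where "K = B * C0 + 1"
  have K0: "K > 0" using mult_nonneg_nonneg[OF B0 C0nn] by (simp add: K_def)
  have main: "norm (q z w) \<le> K * (\<Sum>k\<in>V'. norm z ^ nv k * norm w ^ mv k)"
    if z: "norm z < r1" and w: "norm w < r1" for z w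
  proof -
    define f where "f = (\<lambda>(i,j). b i j * z ^ i * w ^ j)"
    have hf: "(f has_sum q z w) UNIV" unfolding f_def using hs z w r1 by simp
    hence qe: "q z w = infsum f UNIV" by (simp add: infsumI)
    have normf: "norm (f (i,j)) = norm (b i j) * norm z ^ i * norm w ^ j" for i j
      by (simp add: f_def norm_mult norm_power)
    have fa: "(\<lambda>x. norm (f x)) summable_on UNIV"
    proof (rule Infinite_Sum.abs_summable_on_comparison_test'[OF g0s'])
      fix x :: "nat \<times> nat"
      obtain i j where x: "x = (i,j)" by force
      have "norm z ^ i \<le> r1 ^ i" "norm w ^ j \<le> r1 ^ j" using z w by (simp_all add: power_mono)
      hence "norm (b i j) * norm z ^ i * norm w ^ j \<le> norm (b i j) * r1 ^ i * r1 ^ j"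
        using r1 by (intro mult_mono) auto
      thus "norm (f x) \<le> g0 x" using g0nn[of x] by (simp add: x normf g0_def)
    qed
    define G where "G = (\<Sum>k\<in>V'. (norm z / r1) ^ nv k * (norm w / r1) ^ mv k)"
    have Gb: "norm (f x) \<le> g0 x * G" for x
    proof -
      obtain i j where x: "x = (i,j)" by force
      show ?thesis
      proof (cases "b i j = 0")
        case True thus ?thesis by (simp add: x f_def g0_def)
      next
        case False
        have mb: "(norm z / r1) ^ i * (norm w / r1) ^ j \<le> G"
          unfolding G_def V'_def
          by (rule mono_bound[OF V _ _ _ _ False]) (use z w r1 in auto)
        have "norm (f x) = norm (b i j) * r1 ^ i * r1 ^ j * ((norm z / r1) ^ i * (norm w / r1) ^ j)"
          using r1 by (simp add: x normf power_divide field_simps)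
        also have "\<dots> \<le> norm (b i j) * r1 ^ i * r1 ^ j * G"
          using mb r1 by (intro mult_left_mono) auto
        finally show ?thesis by (simp add: x g0_def)
      qed
    qed
    have "norm (q z w) \<le> infsum (\<lambda>x. norm (f x)) UNIV" unfolding qe by (rule norm_infsum_bound[OF fa])
    also have "\<dots> \<le> infsum (\<lambda>x. g0 x * G) UNIV"
      by (rule infsum_mono[OF fa summable_on_cmult_left[OF g0s'] Gb])
    also have "\<dots> = B * G" unfolding B_def by (rule infsum_cmult_left) (use g0s' in auto)
    also have "\<dots> \<le> B * (C0 * (\<Sum>k\<in>V'. norm z ^ nv k * norm w ^ mv k))"
    proof (rule mult_left_mono[OF _ B0])
      have "G = (\<Sum>k\<in>V'. (1/r1) ^ (nv k + mv k) * (norm z ^ nv k * norm w ^ mv k))"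
        unfolding G_def using r1 by (intro sum.cong) (auto simp: power_divide power_add field_simps)
      also have "\<dots> \<le> (\<Sum>k\<in>V'. C0 * (norm z ^ nv k * norm w ^ mv k))"
      proof (rule sum_mono)
        fix k assume k: "k \<in> V'"
        have "(1/r1) ^ (nv k + mv k) \<le> C0" unfolding C0_def
          using finV k r1 by (intro member_le_sum) auto
        thus "(1/r1) ^ (nv k + mv k) * (norm z ^ nv k * norm w ^ mv k) \<le> C0 * (norm z ^ nv k * norm w ^ mv k)"
          by (intro mult_right_mono) auto
      qed
      also have "\<dots> = C0 * (\<Sum>k\<in>V'. norm z ^ nv k * norm w ^ mv k)" by (simp add: sum_distrib_left)
      finally show "G \<le> C0 * (\<Sum>k\<in>V'. norm z ^ nv k * norm w ^ mv k)" .
    qed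
    also have "\<dots> \<le> K * (\<Sum>k\<in>V'. norm z ^ nv k * norm w ^ mv k)"
    proof -
      have S0: "(\<Sum>k\<in>V'. norm z ^ nv k * norm w ^ mv k) \<ge> 0" by (intro sum_nonneg) auto
      show ?thesis unfolding K_def using S0 by (simp add: algebra_simps)
    qed
    finally show ?thesis .
  qed
  show ?thesis using K0 r1 main unfolding V'_def by blast
qed

lemma half_lem: "(x::real) \<noteq> 0 \<Longrightarrow> x * (1/(2*x)) = 1/2" by simp

lemma p_est:
  fixes p :: "complex \<Rightarrow> complex" and a :: complex
  assumes a: "a \<noteq> 0" and d: "\<delta> \<ge> 2" and e: "\<epsilon> > 0"
    and pe: "\<forall>z. norm z < \<epsilon> \<longrightarrow> z \<in> Dz \<and> norm (p z - a * z ^ \<delta>) \<le> C * norm z ^ (\<delta> + 1)"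
  shows "\<exists>\<epsilon>1>0. \<forall>z. norm z < \<epsilon>1 \<longrightarrow> z \<in> Dz \<and> norm (p z) \<le> norm z / 2 \<and>
            norm a / 2 * norm z ^ \<delta> \<le> norm (p z)"
proof -
  define e1 where "e1 = min \<epsilon> (min 1 (min (1/(2*(norm a + \<bar>C\<bar> + 1))) (norm a / (2*(\<bar>C\<bar>+1)))))"
  have h1: "norm a + \<bar>C\<bar> + 1 > 0" "\<bar>C\<bar> + 1 > 0" "norm a > 0"
    using norm_ge_zero[of a] abs_ge_zero[of C] a by (linarith, linarith, simp)
  have h2: "0 < 2 * norm a + 2 * \<bar>C\<bar> + 2" "0 < 2 * \<bar>C\<bar> + 2" using h1 by linarith+
  have e1: "e1 > 0" using e h1 h2 by (auto simp: e1_def)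
  have "\<forall>z. norm z < e1 \<longrightarrow> z \<in> Dz \<and> norm (p z) \<le> norm z / 2 \<and> norm a / 2 * norm z ^ \<delta> \<le> norm (p z)"
  proof (intro allI impI)
    fix z :: complex assume z: "norm z < e1"
    have ze: "norm z < \<epsilon>" "norm z < 1" using z by (auto simp: e1_def)
    have z1: "norm z < 1/(2*(norm a + \<bar>C\<bar> + 1))" using z by (auto simp: e1_def)
    have z2: "norm z < norm a / (2*(\<bar>C\<bar>+1))" using z by (auto simp: e1_def)
    have Dz: "z \<in> Dz" and pe': "norm (p z - a * z ^ \<delta>) \<le> C * norm z ^ (\<delta> + 1)" using pe ze by auto
    have pe2: "norm (p z - a * z ^ \<delta>) \<le> \<bar>C\<bar> * norm z * norm z ^ \<delta>"
    proof -
      have "C * norm z ^ (\<delta> + 1) \<le> \<bar>C\<bar> * norm z ^ (\<delta> + 1)" by (intro mult_right_mono) auto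
      thus ?thesis using pe' by (simp add: algebra_simps)
    qed
    have na: "norm (a * z ^ \<delta>) = norm a * norm z ^ \<delta>" by (simp add: norm_mult norm_power)
    have Cz: "\<bar>C\<bar> * norm z \<le> norm a / 2"
    proof -
      have "(\<bar>C\<bar>+1) * norm z \<le> (\<bar>C\<bar>+1) * (norm a / (2*(\<bar>C\<bar>+1)))"
        using z2 by (intro mult_left_mono) auto
      also have "\<dots> = norm a / 2" by (simp add: field_simps)
      finally show ?thesis by (simp add: algebra_simps) (smt (verit) norm_ge_zero)
    qed
    have lower: "norm a / 2 * norm z ^ \<delta> \<le> norm (p z)"
    proof -
      have "norm (a * z ^ \<delta>) \<le> norm (p z) + norm (p z - a * z ^ \<delta>)"
        by (metis norm_minus_commute norm_triangle_sub)
      hence "norm a * norm z ^ \<delta> - \<bar>C\<bar> * norm z * norm z ^ \<delta> \<le> norm (p z)" using na pe2 by linarith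
      moreover have "\<bar>C\<bar> * norm z * norm z ^ \<delta> \<le> norm a / 2 * norm z ^ \<delta>"
        using Cz by (intro mult_right_mono) auto
      ultimately show ?thesis by linarith
    qed
    have upper: "norm (p z) \<le> norm z / 2"
    proof -
      have "norm (p z) \<le> norm (a * z ^ \<delta>) + norm (p z - a * z ^ \<delta>)"
        by (metis add.commute diff_add_cancel norm_triangle_ineq)
      hence "norm (p z) \<le> (norm a + \<bar>C\<bar> * norm z) * norm z ^ \<delta>" using na pe2 by (simp add: algebra_simps)
      also have "\<dots> \<le> (norm a + \<bar>C\<bar>) * norm z ^ 2"
      proof (intro mult_mono)
        show "norm a + \<bar>C\<bar> * norm z \<le> norm a + \<bar>C\<bar>" using ze by (simp add: mult_left_le)
        show "norm z ^ \<delta> \<le> norm z ^ 2" using ze d by (intro power_decreasing) auto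
      qed auto
      also have "\<dots> = ((norm a + \<bar>C\<bar>) * norm z) * norm z" by (simp add: power2_eq_square)
      also have "\<dots> \<le> (1/2) * norm z"
      proof (intro mult_right_mono)
        have "(norm a + \<bar>C\<bar>) * norm z \<le> (norm a + \<bar>C\<bar> + 1) * norm z" by (intro mult_right_mono) auto
        also have "\<dots> \<le> (norm a + \<bar>C\<bar> + 1) * (1/(2*(norm a + \<bar>C\<bar> + 1)))"
          using z1 by (intro mult_left_mono) auto
        also have "\<dots> = 1/2" using h1 by (intro half_lem) linarith
        finally show "(norm a + \<bar>C\<bar>) * norm z \<le> 1/2" .
      qed auto
      finally show ?thesis by simp
    qed
    show "z \<in> Dz \<and> norm (p z) \<le> norm z / 2 \<and> norm a / 2 * norm z ^ \<delta> \<le> norm (p z)"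
      using Dz lower upper by simp
  qed
  thus ?thesis using e1 by blast
qed

lemma seq_contra:
  fixes A Bs :: "nat \<Rightarrow> real" and \<delta> \<delta>' l c1 c2 c3 :: real
  assumes d: "0 < \<delta>" "\<delta> < \<delta>'" and l: "l \<ge> 0"
    and Ainf: "\<And>M. eventually (\<lambda>n. A n \<ge> M) sequentially"
    and Binf: "\<And>M. eventually (\<lambda>n. Bs n \<ge> M) sequentially"
    and B1: "eventually (\<lambda>n. Bs (Suc n) \<ge> \<delta>' * Bs n - c1) sequentially"
    and A1: "eventually (\<lambda>n. A (Suc n) \<le> \<delta> * A n + c2) sequentially"
    and BA: "eventually (\<lambda>n. Bs n \<le> l * A n + c3) sequentially"
  shows False
proof -
  define d1 where "d1 = \<delta> + 2*((\<delta>' - \<delta>)/3)"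
  define d2 where "d2 = \<delta> + (\<delta>' - \<delta>)/3"
  have q3: "(\<delta>' - \<delta>)/3 > 0" "3 * ((\<delta>' - \<delta>)/3) = \<delta>' - \<delta>" using d by simp_all
  have dd1: "\<delta> < d2" unfolding d2_def using q3 by linarith
  have dd2: "d2 < d1" unfolding d1_def d2_def using q3 by linarith
  have dd3: "d1 < \<delta>'" unfolding d1_def using q3 by linarith
  note dd = dd1 dd2 dd3
  have ev: "eventually (\<lambda>n. Bs n \<ge> max 1 (c1/(\<delta>'-d1)) \<and> A n \<ge> max 1 (max (c2/(d2-\<delta>)) c3)
       \<and> Bs (Suc n) \<ge> \<delta>' * Bs n - c1 \<and> A (Suc n) \<le> \<delta> * A n + c2 \<and> Bs n \<le> l * A n + c3) sequentially"
    using Ainf[of "max 1 (max (c2/(d2-\<delta>)) c3)"] Binf[of "max 1 (c1/(\<delta>'-d1))"] B1 A1 BA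
    by (intro eventually_conj) blast+
  then obtain N where N: "\<And>n. n \<ge> N \<Longrightarrow> Bs n \<ge> max 1 (c1/(\<delta>'-d1)) \<and> A n \<ge> max 1 (max (c2/(d2-\<delta>)) c3)
       \<and> Bs (Suc n) \<ge> \<delta>' * Bs n - c1 \<and> A (Suc n) \<le> \<delta> * A n + c2 \<and> Bs n \<le> l * A n + c3"
    unfolding eventually_sequentially by blast
  have stepB: "Bs (Suc n) \<ge> d1 * Bs n" if "n \<ge> N" for n
  proof -
    have h: "Bs n \<ge> c1/(\<delta>'-d1)" "Bs (Suc n) \<ge> \<delta>' * Bs n - c1" using N[OF that] by auto
    have "c1 \<le> (\<delta>'-d1) * Bs n" using h(1) dd by (simp add: pos_divide_le_eq mult.commute)
    thus ?thesis using h(2) by (simp add: algebra_simps)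
  qed
  have stepA: "A (Suc n) \<le> d2 * A n" if "n \<ge> N" for n
  proof -
    have h: "A n \<ge> c2/(d2-\<delta>)" "A (Suc n) \<le> \<delta> * A n + c2" using N[OF that] by auto
    have "c2 \<le> (d2-\<delta>) * A n" using h(1) dd by (simp add: pos_divide_le_eq mult.commute)
    thus ?thesis using h(2) by (simp add: algebra_simps)
  qed
  have BA': "Bs n \<le> (l+1) * A n" if "n \<ge> N" for n
  proof -
    have "Bs n \<le> l * A n + c3" "A n \<ge> c3" using N[OF that] by auto
    thus ?thesis by (simp add: algebra_simps)
  qed
  have BN: "Bs N \<ge> 1" and AN: "A N \<ge> 1" using N[of N] by auto
  have d2p: "d2 > 0" using dd d by simp
  have indB: "Bs (N+m) \<ge> d1^m * Bs N" for m
  proof (induction m)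
    case (Suc m)
    have "d1^(Suc m) * Bs N = d1 * (d1^m * Bs N)" by simp
    also have "\<dots> \<le> d1 * Bs (N+m)" using Suc dd d2p by (intro mult_left_mono) auto
    also have "\<dots> \<le> Bs (N + Suc m)" using stepB[of "N+m"] by simp
    finally show ?case .
  qed simp
  have indA: "A (N+m) \<le> d2^m * A N" for m
  proof (induction m)
    case (Suc m)
    have "A (N + Suc m) \<le> d2 * A (N+m)" using stepA[of "N+m"] by simp
    also have "\<dots> \<le> d2 * (d2^m * A N)" using Suc d2p by (intro mult_left_mono) auto
    finally show ?case by simp
  qed simp
  have ratio: "(d1/d2)^m \<le> (l+1) * A N / Bs N" for m
  proof -
    have "(l+1) * A (N+m) \<le> (l+1) * (d2^m * A N)" using indA[of m] l by (intro mult_left_mono) auto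
    hence "d1^m * Bs N \<le> (l+1) * (d2^m * A N)"
      using indB[of m] BA'[of "N+m"] by linarith
    hence "d1^m * Bs N \<le> d2^m * ((l+1) * A N)" by (simp add: algebra_simps)
    hence "(d1^m / d2^m) * Bs N \<le> (l+1) * A N" using d2p by (simp add: field_simps)
    thus ?thesis using BN by (simp add: power_divide field_simps)
  qed
  have "1 < d1/d2" using dd d2p by simp
  then obtain m where "(l+1) * A N / Bs N < (d1/d2)^m" using real_arch_pow by blast
  thus False using ratio[of m] by simp
qed

lemma skew_iter:
  "(skew p q ^^ Suc n) x = (p (fst ((skew p q ^^ n) x)), q (fst ((skew p q ^^ n) x)) (snd ((skew p q ^^ n) x)))"
  by (simp add: skew_def case_prod_beta)

lemma geo_null: "0 \<le> c \<Longrightarrow> c < 1 \<Longrightarrow> (\<lambda>n. c^n * (B::real)) \<longlonglongrightarrow> 0"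
  using tendsto_mult[OF LIMSEQ_power_zero[of c] tendsto_const[of B]] by simp

lemma bidisk_stable:
  fixes p :: "complex \<Rightarrow> complex" and q :: "complex \<Rightarrow> complex \<Rightarrow> complex"
  assumes pe: "\<forall>z. norm z < \<epsilon>1 \<longrightarrow> z \<in> Dz \<and> norm (p z) \<le> norm z / 2 \<and> norm a / 2 * norm z ^ \<delta> \<le> norm (p z)"
    and e1: "\<epsilon>1 > 0" and a: "a \<noteq> 0"
    and qb: "\<forall>z w. norm z < \<rho>1 \<longrightarrow> norm w < \<rho>1 \<longrightarrow> norm (q z w) \<le> K1 * (norm z + norm w ^ 2)"
    and K1: "K1 > 0" and r1: "\<rho>1 > 0"
  shows "\<exists>\<eta>>0. \<forall>z w. norm z < \<eta> \<longrightarrow> norm w < \<eta> \<longrightarrow> z \<noteq> 0 \<longrightarrow>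
     (\<forall>n. (skew p q ^^ n) (z,w) \<in> Dz \<times> UNIV \<and> fst ((skew p q ^^ n) (z,w)) \<noteq> 0) \<and>
     ((\<lambda>n. (skew p q ^^ n) (z,w)) \<longlonglongrightarrow> (0,0))"
proof -
  define \<eta>0 where "\<eta>0 = min \<epsilon>1 (min \<rho>1 (min 1 (1/(2*K1))))"
  have \<eta>0: "\<eta>0 > 0" "\<eta>0 \<le> \<epsilon>1" "\<eta>0 \<le> \<rho>1" "\<eta>0 \<le> 1" "\<eta>0 \<le> 1/(2*K1)"
    using e1 r1 K1 by (auto simp: \<eta>0_def)
  define A where "A = 4 * K1"
  have A0: "A > 0" using K1 by (simp add: A_def)
  define \<eta> where "\<eta> = \<eta>0 / (1 + A)"
  have e3: "\<eta> + A * \<eta> = \<eta>0"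
  proof -
    have "\<eta> + A * \<eta> = (1 + A) * \<eta>" by (simp add: algebra_simps)
    also have "\<dots> = \<eta>0" using A0 unfolding \<eta>_def by simp
    finally show ?thesis .
  qed
  have e1': "\<eta> > 0" using \<eta>0 A0 by (simp add: \<eta>_def)
  hence e2: "\<eta> \<le> \<eta>0" using e3 A0 mult_pos_pos[OF A0 e1'] by linarith
  note \<eta> = e1' e2 e3
  have main: "(\<forall>n. (skew p q ^^ n) (z,w) \<in> Dz \<times> UNIV \<and> fst ((skew p q ^^ n) (z,w)) \<noteq> 0) \<and>
     ((\<lambda>n. (skew p q ^^ n) (z,w)) \<longlonglongrightarrow> (0,0))"
    if z: "norm z < \<eta>" and w: "norm w < \<eta>" and z0: "z \<noteq> 0" for z w
  proof -
    define Z where "Z = (\<lambda>n. fst ((skew p q ^^ n) (z,w)))"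
    define W where "W = (\<lambda>n. snd ((skew p q ^^ n) (z,w)))"
    have ZS: "Z (Suc n) = p (Z n)" and WS: "W (Suc n) = q (Z n) (W n)" for n
      unfolding Z_def W_def by (simp_all only: skew_iter fst_conv snd_conv)
    define V0 where "V0 = norm w + A * norm z"
    have V0: "V0 < \<eta>0"
    proof -
      have "A * norm z \<le> A * \<eta>" using z A0 by (intro mult_left_mono) auto
      thus ?thesis using w \<eta> by (simp add: V0_def)
    qed
    have inv: "Z n \<noteq> 0 \<and> norm (Z n) \<le> (1/2)^n * norm z \<and> norm (W n) + A * norm (Z n) \<le> (3/4)^n * V0" for n
    proof (induction n)
      case 0 thus ?case using z0 by (simp add: Z_def W_def V0_def)
    next
      case (Suc n)
      have "(1/2::real)^n * norm z \<le> norm z" by (rule mult_left_le_one_le) (auto intro: power_le_one)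
      hence hz: "norm (Z n) \<le> norm z" using Suc by linarith
      hence zn: "norm (Z n) < \<eta>0" using z \<eta> by linarith
      have wV: "norm (W n) \<le> V0"
      proof -
        have "(3/4::real)^n \<le> 1" by (rule power_le_one) auto
        moreover have "V0 \<ge> 0" using A0 by (simp add: V0_def)
        ultimately have "(3/4)^n * V0 \<le> V0" by (simp add: mult_left_le_one_le)
        moreover have "A * norm (Z n) \<ge> 0" using A0 by simp
        ultimately show ?thesis using Suc by linarith
      qed
      hence wn: "norm (W n) < \<eta>0" using V0 by linarith
      have pz: "norm (p (Z n)) \<le> norm (Z n) / 2" "norm a / 2 * norm (Z n) ^ \<delta> \<le> norm (p (Z n))"
        using pe zn \<eta>0 by auto
      have "norm a / 2 * norm (Z n) ^ \<delta> > 0" using a Suc by simp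
      hence Z1: "Z (Suc n) \<noteq> 0" using pz(2) ZS by auto
      have Z2: "norm (Z (Suc n)) \<le> (1/2)^(Suc n) * norm z" using pz(1) Suc ZS by simp
      have qzw: "norm (W (Suc n)) \<le> K1 * (norm (Z n) + norm (W n) ^ 2)"
        using qb zn wn \<eta>0 WS by auto
      have "K1 * norm (W n) \<le> K1 * (1/(2*K1))" using wn \<eta>0 K1 by (intro mult_left_mono) auto
      hence "K1 * norm (W n) \<le> 1/2" using K1 by simp
      hence "(K1 * norm (W n)) * norm (W n) \<le> (1/2) * norm (W n)" by (intro mult_right_mono) auto
      hence "K1 * norm (W n) ^ 2 \<le> norm (W n) / 2" by (simp add: power2_eq_square mult.assoc)
      hence W1: "norm (W (Suc n)) \<le> K1 * norm (Z n) + norm (W n) / 2" using qzw by (simp add: algebra_simps)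
      have "norm (W (Suc n)) + A * norm (Z (Suc n)) \<le> K1 * norm (Z n) + norm (W n) / 2 + A * (norm (Z n) / 2)"
      proof -
        have "A * norm (Z (Suc n)) \<le> A * (norm (Z n) / 2)" using pz(1) ZS A0 by (intro mult_left_mono) auto
        thus ?thesis using W1 by linarith
      qed
      also have "\<dots> \<le> (3/4) * (norm (W n) + A * norm (Z n))" by (simp add: A_def algebra_simps)
      also have "\<dots> \<le> (3/4) * ((3/4)^n * V0)" using Suc by simp
      finally show ?case using Z1 Z2 by simp
    qed
    have D: "(skew p q ^^ n) (z,w) \<in> Dz \<times> UNIV" for n
    proof -
      have "(1/2::real)^n * norm z \<le> norm z" by (rule mult_left_le_one_le) (auto intro: power_le_one)
      hence "norm (Z n) \<le> norm z" using inv[of n] by linarith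
      hence "norm (Z n) < \<epsilon>1" using z \<eta> \<eta>0 by linarith
      hence "Z n \<in> Dz" using pe by auto
      thus ?thesis by (simp add: Z_def mem_Times_iff)
    qed
    have Zt: "Z \<longlonglongrightarrow> 0"
    proof (rule Lim_null_comparison)
      show "\<forall>\<^sub>F n in sequentially. norm (Z n) \<le> (1/2)^n * norm z" using inv by simp
      show "(\<lambda>n. (1/2::real)^n * norm z) \<longlonglongrightarrow> 0" by (rule geo_null) auto
    qed
    have Wt: "W \<longlonglongrightarrow> 0"
    proof (rule Lim_null_comparison)
      show "\<forall>\<^sub>F n in sequentially. norm (W n) \<le> (3/4)^n * V0"
      proof (intro always_eventually allI)
        fix n
        have "A * norm (Z n) \<ge> 0" using A0 by simp
        thus "norm (W n) \<le> (3/4)^n * V0" using inv[of n] by linarith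
      qed
      show "(\<lambda>n. (3/4::real)^n * V0) \<longlonglongrightarrow> 0" by (rule geo_null) auto
    qed
    have "(\<lambda>n. (Z n, W n)) \<longlonglongrightarrow> (0,0)" using Zt Wt by (rule tendsto_Pair)
    moreover have "(\<lambda>n. (Z n, W n)) = (\<lambda>n. (skew p q ^^ n) (z,w))" by (simp add: Z_def W_def)
    ultimately show ?thesis using D inv by (auto simp: Z_def)
  qed
  show ?thesis using \<eta>(1) main by blast
qed

lemma w_step:
  fixes zz ww ww' K r l \<delta>' :: real and V' :: "nat set" and nv mv :: "nat \<Rightarrow> nat"
  assumes fin: "finite V'" and K: "K > 0" and w: "0 < ww" "ww < 1" and z: "0 < zz" and r: "0 < r"
    and l: "0 < l" and wz: "ww \<ge> r * zz powr l"
    and dd: "\<forall>k\<in>V'. real (nv k) / l + real (mv k) \<ge> \<delta>'" and w': "0 < ww'"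
    and bd: "ww' \<le> K * (\<Sum>k\<in>V'. zz ^ nv k * ww ^ mv k)"
  shows "ln ww' \<le> ln (K * ((\<Sum>k\<in>V'. exp (- real (nv k) * ln r / l)) + 1)) + \<delta>' * ln ww"
proof -
  have "r * zz powr l > 0" using r z by simp
  hence "ln ww \<ge> ln (r * zz powr l)" using wz by (subst ln_le_cancel_iff) auto
  also have "ln (r * zz powr l) = ln r + l * ln zz" using r z by (simp add: ln_mult ln_powr)
  finally have lz: "l * ln zz \<le> ln ww - ln r" by simp
  have lw: "ln ww < 0" using w by simp
  define S where "S = (\<Sum>k\<in>V'. exp (- real (nv k) * ln r / l))"
  have S0: "S \<ge> 0" unfolding S_def by (intro sum_nonneg) auto
  have tm: "zz ^ nv k * ww ^ mv k \<le> exp (\<delta>' * ln ww) * exp (- real (nv k) * ln r / l)" if k: "k \<in> V'" for k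
  proof -
    have e: "zz ^ nv k * ww ^ mv k = exp (real (nv k) * ln zz + real (mv k) * ln ww)"
      using z w by (simp add: exp_add exp_of_nat_mult)
    have "real (nv k) * (l * ln zz) \<le> real (nv k) * (ln ww - ln r)" using lz by (intro mult_left_mono) auto
    hence "real (nv k) * ln zz \<le> (real (nv k) / l) * ln ww - real (nv k) * ln r / l"
      using l by (simp add: field_simps)
    moreover have "(real (nv k) / l + real (mv k)) * ln ww \<le> \<delta>' * ln ww"
      using dd k lw by (intro mult_right_mono_neg) auto
    ultimately have "real (nv k) * ln zz + real (mv k) * ln ww \<le> \<delta>' * ln ww + (- real (nv k) * ln r / l)"
      by (simp add: algebra_simps)
    hence "exp (real (nv k) * ln zz + real (mv k) * ln ww) \<le> exp (\<delta>' * ln ww + (- real (nv k) * ln r / l))"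
      by simp
    also have "exp (\<delta>' * ln ww + (- real (nv k) * ln r / l)) = exp (\<delta>' * ln ww) * exp (- real (nv k) * ln r / l)"
      by (rule exp_add)
    finally show ?thesis unfolding e .
  qed
  have "(\<Sum>k\<in>V'. zz ^ nv k * ww ^ mv k) \<le> (\<Sum>k\<in>V'. exp (\<delta>' * ln ww) * exp (- real (nv k) * ln r / l))"
    using tm by (intro sum_mono) auto
  also have "\<dots> = exp (\<delta>' * ln ww) * S" by (simp add: S_def sum_distrib_left)
  also have "\<dots> \<le> exp (\<delta>' * ln ww) * (S + 1)" by simp
  finally have "ww' \<le> K * (exp (\<delta>' * ln ww) * (S + 1))" using bd K by (smt (verit) mult_left_mono)
  hence "ln ww' \<le> ln (K * (exp (\<delta>' * ln ww) * (S + 1)))" using w' by simp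
  also have "\<dots> = ln (K * (S + 1)) + \<delta>' * ln ww" using K S0 by (simp add: ln_mult)
  finally show ?thesis by (simp add: S_def)
qed

lemma fst_iter_zero:
  assumes "p 0 = 0" "fst u = 0"
  shows "fst ((skew p q ^^ j) u) = 0"
  using assms by (induction j) (simp_all only: skew_iter fst_conv funpow_0)

lemma qb_simple:
  fixes q :: "complex \<Rightarrow> complex \<Rightarrow> complex" and b :: "nat \<Rightarrow> nat \<Rightarrow> complex"
  assumes K: "K > 0" and r1: "0 < \<rho>1" "\<rho>1 < 1"
    and qb: "\<forall>z w. norm z < \<rho>1 \<longrightarrow> norm w < \<rho>1 \<longrightarrow>
      norm (q z w) \<le> K * (\<Sum>k\<in>{k\<in>{1..s}. b (nv k) (mv k) \<noteq> 0}. norm z ^ nv k * norm w ^ mv k)"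
    and b00: "b 0 0 = 0" and b01: "b 0 1 = 0"
  shows "\<forall>z w. norm z < \<rho>1 \<longrightarrow> norm w < \<rho>1 \<longrightarrow>
      norm (q z w) \<le> (K * (real (card {k\<in>{1..s}. b (nv k) (mv k) \<noteq> 0}) + 1)) * (norm z + norm w ^ 2)"
proof (intro allI impI)
  fix z w :: complex assume z: "norm z < \<rho>1" and w: "norm w < \<rho>1"
  define V' where "V' = {k\<in>{1..s}. b (nv k) (mv k) \<noteq> 0}"
  have z1: "norm z < 1" and w1: "norm w < 1" using z w r1 by auto
  have tm: "norm z ^ nv k * norm w ^ mv k \<le> norm z + norm w ^ 2" if k: "k \<in> V'" for k
  proof -
    have bk: "b (nv k) (mv k) \<noteq> 0" using k by (simp add: V'_def)
    show ?thesis
    proof (cases "nv k = 0")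
      case False
      have "norm z ^ nv k \<le> norm z ^ 1" using z1 False by (intro power_decreasing) auto
      moreover have "norm w ^ mv k \<le> 1" using w1 by (intro power_le_one) auto
      ultimately have "norm z ^ nv k * norm w ^ mv k \<le> norm z * 1" by (intro mult_mono) auto
      moreover have "norm w ^ 2 \<ge> 0" by simp
      ultimately show ?thesis by linarith
    next
      case True
      hence "mv k \<ge> 2" using bk b00 b01
        by (metis One_nat_def less_2_cases not_le)
      hence "norm w ^ mv k \<le> norm w ^ 2" using w1 by (intro power_decreasing) auto
      moreover have "norm z \<ge> 0" by simp
      moreover have "norm z ^ nv k * norm w ^ mv k = norm w ^ mv k" using True by simp
      ultimately show ?thesis by linarith
    qed
  qed
  have "norm (q z w) \<le> K * (\<Sum>k\<in>V'. norm z ^ nv k * norm w ^ mv k)" using qb z w by (simp add: V'_def)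
  also have "\<dots> \<le> K * (\<Sum>k\<in>V'. norm z + norm w ^ 2)" using tm K by (intro mult_left_mono sum_mono) auto
  also have "\<dots> = (K * real (card V')) * (norm z + norm w ^ 2)" by simp
  also have "\<dots> \<le> (K * (real (card V') + 1)) * (norm z + norm w ^ 2)"
    using K by (intro mult_right_mono) auto
  finally show "norm (q z w) \<le> (K * (real (card {k\<in>{1..s}. b (nv k) (mv k) \<noteq> 0}) + 1)) * (norm z + norm w ^ 2)"
    by (simp add: V'_def)
qed

theorem theorem2p14:
  fixes p :: "complex \<Rightarrow> complex" and q :: "complex \<Rightarrow> complex \<Rightarrow> complex"
    and b :: "nat \<Rightarrow> nat \<Rightarrow> complex" and a :: complex and \<delta> :: nat
    and Dz :: "complex set"
    and s :: nat and nv mv :: "nat \<Rightarrow> nat" and k :: nat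
  assumes dom: "Dz = UNIV \<or>
      (\<exists>R>0. Dz = ball 0 R \<and>
         compact (closure {z \<in> Dz. (\<forall>n. (p ^^ n) z \<in> Dz) \<and> (\<lambda>n. (p ^^ n) z) \<longlonglongrightarrow> 0})
       \<and> closure {z \<in> Dz. (\<forall>n. (p ^^ n) z \<in> Dz) \<and> (\<lambda>n. (p ^^ n) z) \<longlonglongrightarrow> 0} \<subseteq> ball 0 R)"
    and p_hol: "p holomorphic_on Dz"
    and q_cont: "continuous_on (Dz \<times> UNIV) (\<lambda>(z,w). q z w)"
    and q_hol_w: "\<forall>z\<in>Dz. q z holomorphic_on UNIV"
    and q_hol_z: "\<forall>w. (\<lambda>z. q z w) holomorphic_on Dz"
    and a_nz: "a \<noteq> 0" and delta: "\<delta> \<ge> 2"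
    and p_exp: "\<exists>C \<epsilon>. \<epsilon> > 0 \<and> (\<forall>z. norm z < \<epsilon> \<longrightarrow> z \<in> Dz \<and>
                   norm (p z - a * z ^ \<delta>) \<le> C * norm z ^ (\<delta> + 1))"
    and q_exp: "\<exists>\<rho>>0. \<forall>z w. norm z < \<rho> \<longrightarrow> norm w < \<rho> \<longrightarrow>
                   ((\<lambda>(i,j). b i j * z ^ i * w ^ j) has_sum q z w) UNIV"
    and b00: "b 0 0 = 0" and b01: "b 0 1 = 0"
    and verts: "newton_vertices b s nv mv"
    and case4: "s > 2" "2 \<le> k" "k \<le> s - 1"
      "Tint nv mv k \<le> real \<delta>" "real \<delta> \<le> Tint nv mv (k - 1)"
    and first_vertex: "(nv 1, mv 1) \<noteq> (0, \<delta>)"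
  shows "\<exists>r0>0. \<forall>r. 0 < r \<and> r < r0 \<longrightarrow>
           (\<forall>l. 0 < l \<and> l < real (nv k) / (real \<delta> - real (mv k)) \<longrightarrow>
              Alp (Dz \<times> UNIV) (skew p q) r l
                = basin (Dz \<times> UNIV) (skew p q) (0,0) - Ez (Dz \<times> UNIV) (skew p q))"
  proof -
  obtain C \<epsilon> where e: "\<epsilon> > 0" and pe0: "\<forall>z. norm z < \<epsilon> \<longrightarrow> z \<in> Dz \<and>
                   norm (p z - a * z ^ \<delta>) \<le> C * norm z ^ (\<delta> + 1)"
    using p_exp by blast
  obtain \<epsilon>1 where e1: "\<epsilon>1 > 0" and pe: "\<forall>z. norm z < \<epsilon>1 \<longrightarrow> z \<in> Dz \<and> norm (p z) \<le> norm z / 2 \<and>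
            norm a / 2 * norm z ^ \<delta> \<le> norm (p z)"
    using p_est[OF a_nz delta e pe0] by blast
  have p0: "p 0 = 0"
  proof -
    have "norm (0::complex) < \<epsilon>1" using e1 by simp
    hence "norm (p 0) \<le> norm (0::complex) / 2" using pe by blast
    thus ?thesis by simp
  qed
  obtain K \<rho>1 where K: "K > 0" and r1: "0 < \<rho>1" "\<rho>1 < 1" and qb: "\<forall>z w. norm z < \<rho>1 \<longrightarrow> norm w < \<rho>1 \<longrightarrow>
      norm (q z w) \<le> K * (\<Sum>k\<in>{k\<in>{1..s}. b (nv k) (mv k) \<noteq> 0}. norm z ^ nv k * norm w ^ mv k)"
    using q_bound[OF verts q_exp] by blast
  define V' where "V' = {k\<in>{1..s}. b (nv k) (mv k) \<noteq> 0}"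
  have finV: "finite V'" by (simp add: V'_def)
  define K1 where "K1 = K * (real (card V') + 1)"
  have K1: "K1 > 0" using K unfolding K1_def by (intro mult_pos_pos) auto
  have qb1: "\<forall>z w. norm z < \<rho>1 \<longrightarrow> norm w < \<rho>1 \<longrightarrow> norm (q z w) \<le> K1 * (norm z + norm w ^ 2)"
    using qb_simple[OF K r1 qb b00 b01] unfolding K1_def V'_def by blast
  obtain \<eta> where \<eta>: "\<eta> > 0" and bs: "\<forall>z w. norm z < \<eta> \<longrightarrow> norm w < \<eta> \<longrightarrow> z \<noteq> 0 \<longrightarrow>
     (\<forall>n. (skew p q ^^ n) (z,w) \<in> Dz \<times> UNIV \<and> fst ((skew p q ^^ n) (z,w)) \<noteq> 0) \<and>
     ((\<lambda>n. (skew p q ^^ n) (z,w)) \<longlonglongrightarrow> (0,0))"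
    using bidisk_stable[OF pe e1 a_nz qb1 K1 r1(1)] by blast
  show ?thesis
  proof (intro exI[of _ "min \<eta> 1"] conjI allI impI)
    show "min \<eta> 1 > 0" using \<eta> by simp
    fix r l assume r: "0 < r \<and> r < min \<eta> 1" and l: "0 < l \<and> l < real (nv k) / (real \<delta> - real (mv k))"
    show "Alp (Dz \<times> UNIV) (skew p q) r l = basin (Dz \<times> UNIV) (skew p q) (0,0) - Ez (Dz \<times> UNIV) (skew p q)"
    proof (intro equalityI subsetI)
      fix x assume "x \<in> Alp (Dz \<times> UNIV) (skew p q) r l"
      then obtain n where xn: "x \<in> preim (Dz \<times> UNIV) (skew p q) n (Ulp r l)" by (auto simp: Alp_def)
      define y where "y = (skew p q ^^ n) x"
      have pre: "\<forall>k<n. (skew p q ^^ k) x \<in> Dz \<times> UNIV" and yU: "y \<in> Ulp r l"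
        using xn by (auto simp: preim_def y_def)
      obtain z w where yzw: "y = (z,w)" by force
      have zr: "norm z < r" and wr: "norm w < r * norm z powr l" using yU yzw by (auto simp: Ulp_def)
      have z0: "z \<noteq> 0" using wr by auto
      have "norm z powr l \<le> 1" using zr r l by (intro powr_le1) auto
      hence "r * norm z powr l \<le> r" using r by (simp add: mult_left_le)
      hence wr': "norm w < \<eta>" using wr r by linarith
      have zr': "norm z < \<eta>" using zr r by linarith
      have yprop: "\<forall>m. (skew p q ^^ m) y \<in> Dz \<times> UNIV \<and> fst ((skew p q ^^ m) y) \<noteq> 0"
        and ylim: "(\<lambda>m. (skew p q ^^ m) y) \<longlonglongrightarrow> (0,0)"
        using bs zr' wr' z0 yzw by auto
      have shift: "(skew p q ^^ (m + n)) x = (skew p q ^^ m) y" for m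
        by (simp add: y_def funpow_add)
      have allD: "\<forall>k. (skew p q ^^ k) x \<in> Dz \<times> UNIV"
      proof
        fix k show "(skew p q ^^ k) x \<in> Dz \<times> UNIV"
        proof (cases "k < n")
          case True thus ?thesis using pre by auto
        next
          case False
          hence "k = (k - n) + n" by simp
          hence "(skew p q ^^ k) x = (skew p q ^^ (k - n)) y" using shift by metis
          thus ?thesis using yprop by simp
        qed
      qed
      have "(\<lambda>m. (skew p q ^^ (m + n)) x) \<longlonglongrightarrow> (0,0)" using ylim by (simp add: shift)
      hence xlim: "(\<lambda>m. (skew p q ^^ m) x) \<longlonglongrightarrow> (0,0)" by (rule LIMSEQ_offset)
      have notE: "x \<notin> Ez (Dz \<times> UNIV) (skew p q)"
      proof
        assume "x \<in> Ez (Dz \<times> UNIV) (skew p q)"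
        then obtain m where "x \<in> preim (Dz \<times> UNIV) (skew p q) m {x. fst x = 0}" by (auto simp: Ez_def)
        hence fm: "fst ((skew p q ^^ m) x) = 0" by (auto simp: preim_def)
        show False
        proof (cases "m < n")
          case True
          have "n = (n - m) + m" using True by simp
          hence "y = (skew p q ^^ (n - m)) ((skew p q ^^ m) x)" unfolding y_def by (metis funpow_add comp_apply)
          hence "fst y = 0" using fst_iter_zero[where p=p and q=q and j="n-m" and u="(skew p q ^^ m) x", OF p0 fm] by simp
          thus False using yzw z0 by simp
        next
          case False
          hence "m = (m - n) + n" by simp
          hence "(skew p q ^^ m) x = (skew p q ^^ (m - n)) y" using shift by metis
          thus False using yprop fm by simp
        qed
      qed
      show "x \<in> basin (Dz \<times> UNIV) (skew p q) (0,0) - Ez (Dz \<times> UNIV) (skew p q)"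
        using allD xlim notE by (simp add: basin_def)
    next
      fix x assume xb: "x \<in> basin (Dz \<times> UNIV) (skew p q) (0,0) - Ez (Dz \<times> UNIV) (skew p q)"
      have inD: "\<forall>k. (skew p q ^^ k) x \<in> Dz \<times> UNIV" and lim: "(\<lambda>k. (skew p q ^^ k) x) \<longlonglongrightarrow> (0,0)"
        using xb by (auto simp: basin_def)
      have xD: "x \<in> Dz \<times> UNIV" using inD[rule_format, of 0] by simp
      have nz: "fst ((skew p q ^^ n) x) \<noteq> 0" for n
      proof
        assume "fst ((skew p q ^^ n) x) = 0"
        hence "x \<in> preim (Dz \<times> UNIV) (skew p q) n {x. fst x = 0}" using xD inD by (auto simp: preim_def)
        hence "x \<in> Ez (Dz \<times> UNIV) (skew p q)" by (auto simp: Ez_def)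
        thus False using xb by simp
      qed
      have "\<exists>n. (skew p q ^^ n) x \<in> Ulp r l"
      proof (rule ccontr)
        assume H: "\<not> ?thesis"
        define Z where "Z = (\<lambda>n. fst ((skew p q ^^ n) x))"
        define W where "W = (\<lambda>n. snd ((skew p q ^^ n) x))"
        have ZS: "Z (Suc n) = p (Z n)" and WS: "W (Suc n) = q (Z n) (W n)" for n
          unfolding Z_def W_def by (simp_all only: skew_iter fst_conv snd_conv)
        have Zt: "Z \<longlonglongrightarrow> 0" using tendsto_fst[OF lim] by (simp add: Z_def)
        have Wt: "W \<longlonglongrightarrow> 0" using tendsto_snd[OF lim] by (simp add: W_def)
        have Zne: "Z n \<noteq> 0" for n using nz by (simp add: Z_def)
        define m0 where "m0 = min \<epsilon>1 (min \<rho>1 r)"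
        have m0: "m0 > 0" using e1 r1 r by (simp add: m0_def)
        have evZ: "eventually (\<lambda>n. norm (Z n) < m0) sequentially"
          using tendstoD[OF Zt m0] by simp
        have evW: "eventually (\<lambda>n. norm (W n) < \<rho>1) sequentially"
          using tendstoD[OF Wt r1(1)] by simp
        obtain N where N: "\<And>n. n \<ge> N \<Longrightarrow> norm (Z n) < m0 \<and> norm (W n) < \<rho>1"
          using eventually_conj[OF evZ evW] unfolding eventually_sequentially by blast
        have wge: "norm (W n) \<ge> r * norm (Z n) powr l" if "n \<ge> N" for n
        proof -
          have "(Z n, W n) \<notin> Ulp r l" using H by (simp add: Z_def W_def)
          moreover have "norm (Z n) < r" using N[OF that] by (simp add: m0_def)
          ultimately show ?thesis by (auto simp: Ulp_def)
        qed
        have Wpos: "norm (W n) > 0" if "n \<ge> N" for n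
        proof -
          have "r * norm (Z n) powr l > 0" using r Zne by simp
          thus ?thesis using wge[OF that] by linarith
        qed
        have vi: "\<forall>k\<in>V'. real (nv k)/l + real (mv k) > real \<delta>"
        proof
          fix kk assume "kk \<in> V'"
          hence kk: "1 \<le> kk" "kk \<le> s" by (auto simp: V'_def)
          have "real (nv kk) + l * real (mv kk) > real \<delta> * l"
            using vertex_ineq[OF verts case4(2) case4(3) case4(1) case4(4) case4(5) first_vertex _ _ kk] l by blast
          thus "real (nv kk)/l + real (mv kk) > real \<delta>" using l by (simp add: field_simps)
        qed
        define \<delta>' where "\<delta>' = Min (insert (real \<delta> + 1) ((\<lambda>k. real (nv k)/l + real (mv k)) ` V'))"
        have dd': "real \<delta> < \<delta>'" unfolding \<delta>'_def using finV vi by simp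
        have ddk: "\<forall>k\<in>V'. real (nv k)/l + real (mv k) \<ge> \<delta>'" unfolding \<delta>'_def using finV by simp
        define A where "A = (\<lambda>n. - ln (norm (Z n)))"
        define Bs where "Bs = (\<lambda>n. - ln (norm (W n)))"
        define c1 where "c1 = ln (K * ((\<Sum>k\<in>V'. exp (- real (nv k) * ln r / l)) + 1))"
        show False
        proof (rule seq_contra[of "real \<delta>" \<delta>' l A Bs c1 "- ln (norm a / 2)" "- ln r"])
          show "0 < real \<delta>" using delta by simp
          show "real \<delta> < \<delta>'" by (rule dd')
          show "0 \<le> l" using l by simp
        next
          fix M :: real
          have "eventually (\<lambda>n. norm (Z n) < exp (- M)) sequentially"
            using tendstoD[OF Zt, of "exp (- M)"] by simp
          thus "eventually (\<lambda>n. A n \<ge> M) sequentially"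
          proof (rule eventually_mono)
            fix n assume "norm (Z n) < exp (- M)"
            hence "ln (norm (Z n)) < ln (exp (- M))" using Zne by (subst ln_less_cancel_iff) auto
            thus "A n \<ge> M" by (simp add: A_def)
          qed
        next
          fix M :: real
          have "eventually (\<lambda>n. norm (W n) < exp (- M) \<and> n \<ge> N) sequentially"
            using tendstoD[OF Wt, of "exp (- M)"] eventually_ge_at_top[of N] by (auto intro: eventually_conj)
          thus "eventually (\<lambda>n. Bs n \<ge> M) sequentially"
          proof (rule eventually_mono)
            fix n assume h: "norm (W n) < exp (- M) \<and> n \<ge> N"
            hence "ln (norm (W n)) < ln (exp (- M))" using Wpos by (subst ln_less_cancel_iff) auto
            thus "Bs n \<ge> M" by (simp add: Bs_def)
          qed
        next
          show "eventually (\<lambda>n. Bs (Suc n) \<ge> \<delta>' * Bs n - c1) sequentially"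
            unfolding eventually_sequentially
          proof (intro exI[of _ N] allI impI)
            fix n assume n: "n \<ge> N"
            have h1: "norm (Z n) < \<rho>1" "norm (W n) < \<rho>1" using N[OF n] by (auto simp: m0_def)
            have "norm (q (Z n) (W n)) \<le> K * (\<Sum>k\<in>V'. norm (Z n) ^ nv k * norm (W n) ^ mv k)"
              using qb h1 unfolding V'_def by blast
            hence bd: "norm (W (Suc n)) \<le> K * (\<Sum>k\<in>V'. norm (Z n) ^ nv k * norm (W n) ^ mv k)"
              by (simp only: WS)
            have w1: "norm (W n) < 1" using h1 r1 by linarith
            have z1: "0 < norm (Z n)" using Zne by simp
            have ws: "0 < norm (W (Suc n))" using Wpos[of "Suc n"] n by simp
            have rr: "0 < r" and ll: "0 < l" using r l by auto
            have "ln (norm (W (Suc n))) \<le> c1 + \<delta>' * ln (norm (W n))"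
              unfolding c1_def
              by (rule w_step[OF finV K Wpos[OF n] w1 z1 rr ll wge[OF n] ddk ws bd])
            thus "Bs (Suc n) \<ge> \<delta>' * Bs n - c1" by (simp add: Bs_def algebra_simps)
          qed
        next
          show "eventually (\<lambda>n. A (Suc n) \<le> real \<delta> * A n + - ln (norm a / 2)) sequentially"
            unfolding eventually_sequentially
          proof (intro exI[of _ N] allI impI)
            fix n assume n: "n \<ge> N"
            have "norm (Z n) < \<epsilon>1" using N[OF n] by (simp add: m0_def)
            hence lo: "norm a / 2 * norm (Z n) ^ \<delta> \<le> norm (Z (Suc n))" using pe ZS by auto
            have pos: "norm a / 2 * norm (Z n) ^ \<delta> > 0" using a_nz Zne by simp
            have "ln (norm a / 2 * norm (Z n) ^ \<delta>) \<le> ln (norm (Z (Suc n)))"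
              using lo pos by (subst ln_le_cancel_iff) auto
            moreover have "ln (norm a / 2 * norm (Z n) ^ \<delta>) = ln (norm a / 2) + real \<delta> * ln (norm (Z n))"
            proof -
              have "ln (norm a / 2 * norm (Z n) ^ \<delta>) = ln (norm a / 2) + ln (norm (Z n) ^ \<delta>)"
                by (rule ln_mult_pos) (use a_nz Zne in auto)
              thus ?thesis by (simp only: ln_realpow)
            qed
            ultimately show "A (Suc n) \<le> real \<delta> * A n + - ln (norm a / 2)"
              by (simp add: A_def algebra_simps)
          qed
        next
          show "eventually (\<lambda>n. Bs n \<le> l * A n + - ln r) sequentially"
            unfolding eventually_sequentially
          proof (intro exI[of _ N] allI impI)
            fix n assume n: "n \<ge> N"
            have pos: "r * norm (Z n) powr l > 0" using r Zne by simp
            have "ln (r * norm (Z n) powr l) \<le> ln (norm (W n))"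
              using wge[OF n] pos by (subst ln_le_cancel_iff) auto
            moreover have "ln (r * norm (Z n) powr l) = ln r + l * ln (norm (Z n))"
              using r Zne by (simp add: ln_mult)
            ultimately show "Bs n \<le> l * A n + - ln r" by (simp add: A_def Bs_def algebra_simps)
          qed
        qed
      qed
      then obtain n where "(skew p q ^^ n) x \<in> Ulp r l" by blast
      hence "x \<in> preim (Dz \<times> UNIV) (skew p q) n (Ulp r l)" using xD inD by (auto simp: preim_def)
      thus "x \<in> Alp (Dz \<times> UNIV) (skew p q) r l" by (auto simp: Alp_def)
    qed
  qed
qed


end
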